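(* For every $N$ with $4 \le N \le 10$, there is no multiset $\{d_1,\dots,d_N\}$ of decimal digits with $d_1 \neq 0$ such that, for every permutation $\sigma$ of $\{1,\dots,N\}$, the integer $\sum_{i=1}^{N} d_{\sigma(i)}\,10^{N-i}$ is prime.
   Context: Integers are written in base 10; the integer obtained from the digit sequence $(a_1,\dots,a_N)$ is $\sum_{i=1}^N a_i 10^{N-i}$. *)

theory Defs
  imports "HOL-Computational_Algebra.Primes" "HOL-Combinatorics.Permutations"
begin

end

theory Submission imports Defs begin

fun dval :: "nat list \<Rightarrow> nat" where
  "dval [] = 0"
| "dval (x # xs) = x * 10 ^ length xs + dval xs"

definition cnt :: "nat list \<Rightarrow> nat \<times> nat \<times> nat \<times> nat" where
  "cnt w = (count_list w 1, count_list w 3, count_list w 7, count_list w 9)"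

definition cenum :: "(nat \<times> nat \<times> nat \<times> nat) list" where
  "cenum = [(a,b,c,N-a-b-c). N \<leftarrow> [4..<11], a \<leftarrow> [0..<N+1], b \<leftarrow> [0..<N-a+1], c \<leftarrow> [0..<N-a-b+1]]"

definition okp :: "nat list \<times> nat \<Rightarrow> bool" where
  "okp = (\<lambda>(w,p). 1 < p \<and> p < dval w \<and> dval w mod p = 0 \<and> list_all (\<lambda>x. x \<in> {1,3,7,9}) w)"

definition tab0 :: "(nat list \<times> nat) list" where
  "tab0 = [([9,9,9,9],3),
([9,9,9,7],13),
([7,7,9,9],11),
([7,7,7,9],3),
([7,7,7,7],7),
([3,9,9,9],3),
([3,9,9,7],7),
([7,3,9,7],13),
([3,7,7,7],3),
([3,3,9,9],3),
([9,3,7,3],7),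
([3,3,7,7],11),
([3,3,3,9],3),
([3,3,3,7],47),
([3,3,3,3],3),
([9,9,1,9],7),
([1,7,9,9],7),
([1,7,7,9],3),
([7,7,7,1],19),
([1,9,3,9],7),
([1,3,7,9],7),
([1,3,7,7],3),
([1,3,3,9],13),
([1,3,3,7],7),
([3,1,3,3],13),
([1,1,9,9],11),
([1,1,7,9],3),
([1,1,7,7],11),
([1,3,9,1],13),
([1,1,3,7],3),
([1,1,3,3],11),
([1,1,1,9],3),
([7,1,1,1],13),
([1,1,1,3],3),
([1,1,1,1],11),
([9,9,9,9,9],3),
([9,7,9,9,9],11),
([9,7,7,9,9],13),
([7,7,7,9,9],3),
([7,7,7,7,9],13),
([7,7,7,7,7],7),
([3,9,9,9,9],3),
([3,7,9,9,9],13),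
([3,9,9,7,7],7),
([3,7,7,7,9],3),
([7,3,7,7,7],11),
([3,3,9,9,9],3),
([3,3,9,7,9],11),
([3,7,7,3,9],13),
([3,3,7,7,7],3)]"

definition tab1 :: "(nat list \<times> nat) list" where
  "tab1 = [([3,3,3,9,9],3),
([3,3,3,9,7],7),
([3,3,7,3,7],11),
([3,3,3,3,9],3),
([3,3,7,3,3],7),
([3,3,3,3,3],3),
([1,9,9,9,9],7),
([1,9,7,9,9],13),
([1,7,7,9,9],3),
([1,7,7,9,7],13),
([7,7,7,1,7],23),
([3,1,9,9,9],11),
([1,3,9,7,9],7),
([1,3,7,7,9],3),
([1,7,7,7,3],7),
([1,3,9,9,3],7),
([1,3,7,3,9],11),
([1,3,3,7,7],3),
([3,1,3,3,9],7),
([3,1,7,3,3],13),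
([3,3,3,1,3],7),
([1,1,9,9,9],13),
([1,1,7,9,9],3),
([1,1,9,7,7],7),
([1,7,7,1,7],7),
([3,1,1,9,9],7),
([1,1,3,7,9],3),
([1,1,7,3,7],11),
([1,3,1,3,9],7),
([1,1,3,3,7],3),
([1,1,3,3,3],7),
([1,1,1,9,9],3),
([1,1,1,7,9],7),
([1,7,1,7,1],7),
([1,1,1,3,9],3),
([1,1,1,3,7],7),
([1,1,1,3,3],3),
([1,1,1,9,1],19),
([1,1,7,1,1],7),
([1,3,1,1,1],7),
([1,1,1,1,1],41),
([9,9,9,9,9,9],3),
([9,7,9,9,9,9],17),
([7,7,9,9,9,9],11),
([7,7,7,9,9,9],3),
([7,7,7,7,9,9],11),
([9,7,7,7,7,7],43),
([7,7,7,7,7,7],3),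
([3,9,9,9,9,9],3),
([3,9,7,9,9,9],7)]"

definition tab2 :: "(nat list \<times> nat) list" where
  "tab2 = [([3,7,9,7,9,9],7),
([3,7,7,7,9,9],3),
([3,7,7,7,9,7],7),
([3,7,7,7,7,7],19),
([3,3,9,9,9,9],3),
([3,3,9,9,9,7],7),
([3,3,7,7,9,9],7),
([3,3,7,7,7,9],3),
([3,3,7,7,7,7],11),
([3,3,3,9,9,9],3),
([3,3,7,9,3,9],7),
([3,3,3,9,7,7],7),
([3,3,3,7,7,7],3),
([3,3,3,3,9,9],3),
([3,3,3,7,3,9],7),
([3,3,3,3,7,7],11),
([3,3,3,3,3,9],3),
([3,7,3,3,3,3],31),
([3,3,3,3,3,3],3),
([9,9,9,9,9,1],17),
([1,9,9,9,7,9],13),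
([1,7,7,9,9,9],3),
([1,7,9,9,7,7],7),
([1,7,7,7,7,9],7),
([1,7,7,7,7,7],3),
([1,9,3,9,9,9],13),
([1,3,9,7,9,9],11),
([1,3,7,7,9,9],3),
([1,3,7,7,9,7],11),
([1,7,7,7,3,7],7),
([1,3,9,3,9,9],13),
([1,3,9,9,3,7],7),
([1,3,3,7,7,9],3),
([1,3,3,7,7,7],7),
([1,3,3,3,9,9],7),
([1,3,3,3,9,7],11),
([1,3,3,3,7,7],3),
([1,3,3,3,9,3],13),
([1,3,7,3,3,3],7),
([3,3,3,1,3,3],131),
([1,1,9,9,9,9],11),
([1,1,7,9,9,9],3),
([1,1,7,7,9,9],11),
([1,1,9,7,7,7],7),
([1,1,7,7,7,7],3),
([1,1,9,3,9,9],7),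
([1,1,3,7,9,9],3),
([1,1,7,3,9,7],7),
([1,1,7,3,7,7],13),
([1,1,3,3,9,9],11)]"

definition tab3 :: "(nat list \<times> nat) list" where
  "tab3 = [([1,1,3,3,7,9],3),
([1,1,3,3,7,7],11),
([1,1,3,3,9,3],7),
([1,1,3,3,3,7],3),
([1,1,3,3,3,3],11),
([1,1,1,9,9,9],3),
([1,1,1,9,7,9],7),
([1,1,1,7,9,7],7),
([1,1,1,7,7,7],3),
([1,1,1,3,9,9],3),
([1,1,1,3,9,7],11),
([1,1,1,3,7,7],7),
([1,1,1,3,3,9],3),
([1,1,7,3,1,3],7),
([1,1,1,3,3,3],3),
([1,1,1,1,9,9],11),
([1,1,1,9,1,7],13),
([1,1,1,1,7,7],3),
([1,1,1,1,3,9],7),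
([1,1,1,1,3,7],13),
([1,1,1,1,3,3],11),
([1,1,1,9,1,1],17),
([1,1,1,1,1,7],3),
([1,1,1,1,3,1],19),
([1,1,1,1,1,1],3),
([9,9,9,9,9,9,9],3),
([7,9,9,9,9,9,9],7),
([7,9,9,9,9,7,9],13),
([7,7,7,9,9,9,9],3),
([7,7,9,7,9,7,9],7),
([7,7,7,7,9,7,9],11),
([7,7,7,7,7,7,9],3),
([7,7,7,7,7,7,7],7),
([3,9,9,9,9,9,9],3),
([3,7,9,9,9,9,9],7),
([3,9,7,9,9,9,7],7),
([3,7,7,7,9,9,9],3),
([3,7,7,9,7,9,7],7),
([3,7,7,7,9,7,7],7),
([3,7,7,7,7,7,7],3),
([3,3,9,9,9,9,9],3),
([3,3,7,9,9,9,9],7),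
([3,3,9,7,9,7,9],13),
([3,3,7,7,7,9,9],3),
([3,7,3,7,7,9,7],7),
([3,3,7,7,7,7,7],13),
([3,3,3,9,9,9,9],3),
([3,3,3,7,9,9,9],7),
([3,3,3,7,9,9,7],13),
([3,3,3,7,7,7,9],3)]"

definition tab4 :: "(nat list \<times> nat) list" where
  "tab4 = [([3,3,7,3,7,7,7],11),
([3,3,3,3,9,9,9],3),
([3,3,3,3,7,9,9],7),
([3,3,3,7,3,9,7],7),
([3,3,3,3,7,7,7],3),
([3,3,3,3,3,9,9],3),
([3,3,3,3,3,7,9],7),
([3,3,3,3,7,3,7],11),
([3,3,3,3,3,3,9],3),
([3,3,3,3,3,3,7],7),
([3,3,3,3,3,3,3],3),
([9,9,9,9,1,9,9],7),
([1,9,7,9,9,9,9],7),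
([1,7,7,9,9,9,9],3),
([1,7,7,9,7,9,9],7),
([1,7,7,7,9,7,9],7),
([1,7,7,7,7,7,9],3),
([7,7,7,1,7,7,7],13),
([1,9,9,3,9,9,9],7),
([1,3,9,9,9,7,9],7),
([1,3,7,7,9,9,9],3),
([1,3,9,7,9,7,7],7),
([1,3,7,7,7,7,9],13),
([1,3,7,7,7,7,7],3),
([1,3,9,9,9,9,3],7),
([1,3,3,7,9,9,9],13),
([1,3,3,7,7,9,9],3),
([1,3,7,3,7,7,9],11),
([1,3,3,7,7,7,7],7),
([1,3,9,3,3,9,9],7),
([1,3,3,3,9,9,7],7),
([1,3,3,3,7,7,9],3),
([1,3,7,7,3,3,7],13),
([1,3,3,9,3,9,3],11),
([1,3,3,3,3,9,7],13),
([1,3,3,3,3,7,7],3),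
([1,3,3,3,3,3,9],7),
([1,3,7,3,3,3,3],13),
([3,1,3,3,3,3,3],7),
([1,9,9,9,9,9,1],7),
([1,1,7,9,9,9,9],3),
([1,1,7,9,9,9,7],7),
([1,1,7,7,7,9,9],7),
([1,1,7,7,7,7,9],3),
([1,7,7,1,7,7,7],7),
([1,1,3,9,9,9,9],7),
([1,1,3,7,9,9,9],3),
([1,1,3,7,7,9,9],13),
([1,1,7,3,9,7,7],7),
([1,1,3,7,7,7,7],3)]"

definition tab5 :: "(nat list \<times> nat) list" where
  "tab5 = [([1,1,9,9,3,9,3],13),
([1,1,3,3,7,9,9],3),
([1,1,3,3,7,9,7],7),
([1,1,3,7,7,7,3],7),
([1,1,3,3,9,9,3],7),
([1,1,3,3,3,7,9],3),
([1,1,3,3,3,7,7],7),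
([1,1,3,9,3,3,3],13),
([1,1,3,3,3,3,7],3),
([1,3,1,3,3,3,3],7),
([1,1,1,9,9,9,9],3),
([1,1,1,9,9,7,9],7),
([1,1,1,9,7,9,7],7),
([1,1,1,7,7,7,9],3),
([1,1,7,7,7,7,1],7),
([1,1,1,3,9,9,9],3),
([1,1,1,9,9,3,7],7),
([1,1,1,7,7,3,9],7),
([1,1,1,3,7,7,7],3),
([1,1,1,3,3,9,9],3),
([1,1,1,3,7,3,9],11),
([1,1,1,7,3,3,7],13),
([1,1,1,3,3,3,9],3),
([1,1,1,7,3,3,3],7),
([1,1,1,3,3,3,3],3),
([1,1,1,1,9,9,9],7),
([1,1,1,1,7,9,9],13),
([1,1,1,1,7,7,9],3),
([1,1,7,1,1,7,7],7),
([1,1,1,9,1,3,9],7),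
([1,1,1,1,3,9,7],7),
([1,1,1,1,3,7,7],3),
([1,1,1,3,9,3,1],7),
([1,1,1,1,7,3,3],7),
([1,1,1,3,1,3,3],7),
([1,1,1,9,9,1,1],13),
([1,1,1,1,1,7,9],3),
([1,1,1,7,1,7,1],11),
([1,1,1,1,3,1,9],11),
([1,1,1,1,1,3,7],3),
([1,1,1,1,3,1,3],7),
([1,1,1,1,1,1,9],3),
([1,1,1,1,1,1,7],7),
([1,1,1,1,1,1,3],3),
([1,1,1,1,1,1,1],239),
([9,9,9,9,9,9,9,9],3),
([9,9,7,9,9,9,9,9],13),
([7,7,9,9,9,9,9,9],7),
([7,7,7,9,9,9,9,9],3),
([7,7,7,7,9,9,9,9],11)]"

definition tab6 :: "(nat list \<times> nat) list" where
  "tab6 = [([7,7,7,7,7,9,9,9],13),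
([7,7,7,7,7,7,9,9],3),
([7,7,7,7,9,7,7,7],17),
([7,7,7,7,7,7,7,7],7),
([3,9,9,9,9,9,9,9],3),
([3,9,9,9,9,7,9,9],7),
([3,7,9,9,7,9,9,9],13),
([3,7,7,7,9,9,9,9],3),
([3,7,7,7,7,9,9,9],7),
([3,7,7,7,9,7,9,7],11),
([3,7,7,7,7,7,7,9],3),
([7,7,7,3,7,7,7,7],13),
([3,3,9,9,9,9,9,9],3),
([3,3,9,9,7,9,9,9],7),
([3,3,7,7,9,9,9,9],11),
([3,3,7,7,7,9,9,9],3),
([3,3,7,7,7,7,9,9],11),
([3,3,7,7,7,7,7,9],7),
([3,3,7,7,7,7,7,7],3),
([3,3,3,9,9,9,9,9],3),
([3,3,9,3,9,9,9,7],7),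
([3,3,3,7,9,9,9,7],7),
([3,3,3,7,7,7,9,9],3),
([3,3,3,9,7,7,7,7],7),
([3,3,7,7,7,7,3,7],7),
([3,3,3,3,9,9,9,9],3),
([3,3,3,9,3,9,9,7],7),
([3,3,3,3,7,7,9,9],11),
([3,3,3,3,7,7,7,9],3),
([3,3,3,3,7,7,7,7],11),
([3,3,3,3,3,9,9,9],3),
([3,3,3,3,3,9,7,9],7),
([3,3,3,3,3,7,9,7],7),
([3,3,3,3,3,7,7,7],3),
([3,3,3,3,3,3,9,9],3),
([3,3,3,3,3,9,3,7],7),
([3,3,3,3,3,3,7,7],7),
([3,3,3,3,3,3,3,9],3),
([3,3,3,7,3,3,3,3],7),
([3,3,3,3,3,3,3,3],3),
([9,1,9,9,9,9,9,9],7),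
([1,9,9,7,9,9,9,9],13),
([1,7,7,9,9,9,9,9],3),
([1,7,9,7,7,9,9,9],13),
([1,7,7,7,9,9,7,9],7),
([1,7,7,7,7,7,9,9],3),
([1,7,7,7,7,9,7,7],7),
([7,7,7,7,7,7,7,1],17),
([1,3,9,9,9,9,9,9],13),
([1,3,9,7,9,9,9,9],11)]"

definition tab7 :: "(nat list \<times> nat) list" where
  "tab7 = [([1,3,7,7,9,9,9,9],3),
([1,3,7,7,9,7,9,9],11),
([1,3,7,7,7,7,9,9],7),
([1,3,7,7,7,7,7,9],3),
([1,3,7,7,7,7,7,7],13),
([1,3,9,9,9,9,9,3],7),
([1,3,3,9,9,7,9,9],7),
([1,3,3,7,7,9,9,9],3),
([1,3,3,7,9,7,7,9],7),
([1,3,7,3,7,7,7,9],11),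
([1,3,3,7,7,7,7,7],3),
([1,3,3,9,9,3,9,9],13),
([1,3,3,3,9,7,9,9],11),
([1,3,3,3,7,7,9,9],3),
([1,3,3,3,7,7,7,9],7),
([1,3,3,7,7,3,7,7],13),
([1,3,3,3,3,9,9,9],7),
([1,3,3,3,9,7,3,9],7),
([1,3,3,3,3,7,7,9],3),
([1,3,3,3,7,7,3,7],7),
([1,3,3,3,9,3,3,9],13),
([1,3,3,3,3,3,9,7],7),
([1,3,3,3,3,3,7,7],3),
([1,3,3,3,9,3,3,3],7),
([1,3,3,3,3,7,3,3],7),
([1,3,3,3,3,3,3,3],13),
([1,1,9,9,9,9,9,9],11),
([1,1,7,9,9,9,9,9],3),
([1,1,7,7,9,9,9,9],7),
([1,1,7,9,7,7,9,9],13),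
([1,1,7,7,7,7,9,9],3),
([1,1,7,7,7,7,7,9],13),
([1,1,7,7,7,7,7,7],11),
([1,1,3,9,9,9,9,9],13),
([1,1,3,7,9,9,9,9],3),
([1,1,3,7,9,9,7,9],13),
([1,1,3,7,9,7,9,7],11),
([1,1,3,7,7,7,7,9],3),
([1,1,7,7,7,7,7,3],7),
([1,1,3,3,9,9,9,9],11),
([1,1,3,3,7,9,9,9],3),
([1,1,3,3,7,7,9,9],11),
([1,1,3,3,7,9,7,7],7),
([1,1,3,3,7,7,7,7],3),
([1,1,3,3,9,9,3,9],13),
([1,1,3,3,3,7,9,9],3),
([1,1,3,3,7,7,3,9],7),
([1,1,3,3,3,7,7,7],7),
([1,1,3,3,3,3,9,9],7),
([1,1,3,3,3,3,7,9],3)]"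

definition tab8 :: "(nat list \<times> nat) list" where
  "tab8 = [([1,1,3,3,3,3,7,7],11),
([1,1,3,3,3,9,3,3],13),
([1,1,3,3,3,3,3,7],3),
([1,1,3,3,3,3,3,3],11),
([1,1,1,9,9,9,9,9],3),
([1,1,1,9,9,7,9,9],13),
([1,1,1,7,7,9,9,9],7),
([1,1,1,7,7,7,9,9],3),
([1,1,1,7,9,7,7,7],7),
([1,1,1,7,7,7,7,7],13),
([1,1,1,3,9,9,9,9],3),
([1,1,1,3,9,7,9,9],11),
([1,1,1,3,7,9,9,7],13),
([1,1,1,3,7,7,7,9],3),
([1,1,1,3,7,7,7,7],7),
([1,1,1,3,3,9,9,9],3),
([1,1,1,3,3,9,9,7],7),
([1,1,1,3,7,3,7,9],11),
([1,1,1,3,3,7,7,7],3),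
([1,1,1,3,3,3,9,9],3),
([1,1,1,3,3,3,9,7],11),
([1,1,1,3,3,7,7,3],7),
([1,1,1,3,3,3,3,9],3),
([1,1,1,3,3,7,3,3],13),
([1,1,1,3,3,3,3,3],3),
([1,1,1,1,9,9,9,9],11),
([1,1,1,1,9,9,7,9],13),
([1,1,1,1,7,7,9,9],3),
([1,1,1,1,7,9,7,7],13),
([1,1,1,1,7,7,7,7],11),
([1,1,1,1,3,9,9,9],13),
([1,1,1,1,7,9,3,9],7),
([1,1,1,1,3,7,7,9],3),
([1,1,1,7,1,3,7,7],7),
([1,1,1,1,3,3,9,9],11),
([1,1,1,1,3,7,3,9],7),
([1,1,1,1,3,3,7,7],3),
([1,1,1,3,1,3,9,3],7),
([1,1,1,3,1,3,3,7],7),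
([1,1,1,1,3,3,3,3],7),
([1,1,1,1,9,1,9,9],7),
([1,1,1,1,1,7,9,9],3),
([1,1,1,1,1,7,7,9],7),
([1,1,1,1,7,7,1,7],13),
([1,1,1,1,1,3,9,9],13),
([1,1,1,1,1,3,7,9],3),
([1,1,1,1,1,7,3,7],7),
([1,1,1,1,1,9,3,3],7),
([1,1,1,1,1,3,3,7],3),
([1,1,1,3,1,1,3,3],13)]"

definition tab9 :: "(nat list \<times> nat) list" where
  "tab9 = [([1,1,1,1,1,1,9,9],3),
([1,1,1,1,1,9,7,1],13),
([1,1,1,1,1,1,7,7],7),
([1,1,1,1,1,1,3,9],3),
([1,1,1,1,1,3,1,7],7),
([1,1,1,1,1,1,3,3],3),
([1,1,1,1,1,1,9,1],7),
([1,1,1,1,1,7,1,1],13),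
([1,1,1,1,1,1,1,3],13),
([1,1,1,1,1,1,1,1],11),
([9,9,9,9,9,9,9,9,9],3),
([9,7,9,9,9,9,9,9,9],11),
([7,9,9,9,7,9,9,9,9],7),
([7,7,7,9,9,9,9,9,9],3),
([7,7,9,7,9,9,9,7,9],7),
([7,7,7,7,9,7,9,9,9],11),
([7,7,7,7,7,7,9,9,9],3),
([7,7,7,7,7,7,9,7,9],11),
([7,7,9,7,7,7,7,7,7],17),
([7,7,7,7,7,7,7,7,7],3),
([3,9,9,9,9,9,9,9,9],3),
([7,9,3,9,9,9,9,9,9],13),
([3,7,7,9,9,9,9,9,9],13),
([3,7,7,7,9,9,9,9,9],3),
([3,7,7,7,9,9,7,9,9],13),
([3,7,7,7,7,9,9,9,7],7),
([3,7,7,7,7,7,7,9,9],3),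
([3,7,7,7,9,7,7,7,7],7),
([3,7,7,7,7,7,7,7,7],13),
([3,3,9,9,9,9,9,9,9],3),
([3,3,9,7,9,9,9,9,9],7),
([3,3,7,9,7,9,9,9,9],7),
([3,3,7,7,7,9,9,9,9],3),
([3,3,7,7,7,7,9,9,9],13),
([3,3,7,7,7,7,9,7,9],7),
([3,3,7,7,7,7,7,7,9],3),
([3,7,7,3,7,7,7,7,7],7),
([3,3,3,9,9,9,9,9,9],3),
([3,3,3,7,9,9,9,9,9],13),
([3,3,3,7,7,9,9,9,9],7),
([3,3,3,7,7,7,9,9,9],3),
([3,3,3,7,7,7,9,9,7],7),
([3,3,3,7,7,7,9,7,7],13),
([3,3,3,7,7,7,7,7,7],3),
([3,3,3,3,9,9,9,9,9],3),
([3,3,3,3,9,7,9,9,9],11),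
([3,3,3,3,9,7,7,9,9],7),
([3,3,3,3,7,7,7,9,9],3),
([3,3,3,3,7,7,7,7,9],7),
([3,3,3,7,7,7,7,7,3],7)]"

definition tab10 :: "(nat list \<times> nat) list" where
  "tab10 = [([3,3,3,3,3,9,9,9,9],3),
([3,3,3,3,3,9,7,9,9],13),
([3,3,3,3,3,7,9,7,9],13),
([3,3,3,3,3,7,7,7,9],3),
([3,3,3,3,7,3,7,7,7],11),
([3,3,3,3,3,3,9,9,9],3),
([3,3,3,3,3,3,9,7,9],11),
([3,3,3,3,3,7,7,3,9],7),
([3,3,3,3,3,3,7,7,7],3),
([3,3,3,3,3,3,3,9,9],3),
([3,3,3,3,3,3,7,9,3],13),
([3,3,3,3,3,3,3,7,7],13),
([3,3,3,3,3,3,3,3,9],3),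
([3,3,3,3,3,7,3,3,3],7),
([3,3,3,3,3,3,3,3,3],3),
([9,9,9,1,9,9,9,9,9],7),
([1,9,9,7,9,9,9,9,9],7),
([1,7,7,9,9,9,9,9,9],3),
([1,7,7,7,9,9,9,9,9],13),
([1,7,7,7,9,9,9,7,9],7),
([1,7,7,7,7,7,9,9,9],3),
([1,7,7,7,7,9,7,9,7],13),
([1,7,7,7,7,7,9,7,7],13),
([1,7,7,7,7,7,7,7,7],3),
([1,9,9,9,3,9,9,9,9],7),
([1,3,9,9,9,9,9,7,9],7),
([1,3,7,7,9,9,9,9,9],3),
([1,3,7,7,7,9,9,9,9],7),
([1,3,7,7,9,7,9,7,9],11),
([1,3,7,7,7,7,7,9,9],3),
([1,3,7,7,9,7,7,7,7],13),
([1,7,7,7,3,7,7,7,7],7),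
([1,3,3,9,9,9,9,9,9],7),
([1,3,7,3,9,9,9,9,9],11),
([1,3,3,7,7,9,9,9,9],3),
([1,3,3,7,7,9,9,9,7],13),
([1,3,3,7,7,9,7,7,9],7),
([1,3,3,7,7,7,7,7,9],3),
([1,3,3,7,7,7,7,7,7],7),
([1,3,9,3,9,9,9,3,9],7),
([1,3,3,3,9,7,9,9,9],7),
([1,3,3,3,7,7,9,9,9],3),
([1,3,3,3,7,7,9,7,9],7),
([1,3,3,3,7,7,7,9,7],7),
([1,3,3,3,7,7,7,7,7],3),
([1,3,3,3,3,9,9,9,9],13),
([1,3,3,3,3,9,9,9,7],7),
([1,3,3,3,3,7,7,9,9],3),
([1,3,3,3,7,3,7,7,9],7),
([1,3,3,3,7,7,3,7,7],7)]"

definition tab11 :: "(nat list \<times> nat) list" where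
  "tab11 = [([1,3,3,3,9,3,9,3,9],7),
([1,3,3,3,3,7,3,9,9],13),
([1,3,3,3,3,3,7,7,9],3),
([1,3,3,3,3,7,7,3,7],13),
([1,3,3,3,3,3,9,9,3],13),
([1,3,3,3,3,3,7,3,9],7),
([1,3,3,3,3,3,3,7,7],3),
([3,1,3,3,3,3,3,3,9],11),
([1,3,3,3,3,3,7,3,3],13),
([1,3,3,3,3,3,3,3,3],7),
([1,1,9,9,9,9,9,9,9],7),
([1,1,7,9,9,9,9,9,9],3),
([1,1,7,9,9,7,9,9,9],7),
([1,1,7,7,9,7,9,9,9],11),
([1,1,7,7,7,7,9,9,9],3),
([1,1,7,7,7,7,9,7,9],11),
([1,1,7,7,7,7,7,7,9],7),
([1,1,7,7,7,7,7,7,7],3),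
([1,1,9,9,9,9,3,9,9],13),
([1,1,3,7,9,9,9,9,9],3),
([1,1,3,7,9,7,9,9,9],7),
([1,1,3,7,7,9,7,9,9],7),
([1,1,3,7,7,7,7,9,9],3),
([1,1,3,7,7,7,7,9,7],7),
([1,1,7,3,7,7,7,7,7],11),
([1,1,3,9,9,3,9,9,9],7),
([1,1,3,3,7,9,9,9,9],3),
([1,1,3,3,7,7,9,9,9],7),
([1,1,3,3,7,7,9,7,9],11),
([1,1,3,3,7,7,7,7,9],3),
([1,1,3,7,7,3,7,7,7],13),
([1,1,3,3,9,9,9,9,3],7),
([1,1,3,3,3,7,9,9,9],3),
([1,1,3,3,3,9,7,7,9],7),
([1,1,3,3,7,7,3,9,7],7),
([1,1,3,3,3,7,7,7,7],3),
([1,1,3,3,3,9,9,9,3],13),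
([1,1,3,3,3,3,7,9,9],3),
([1,1,3,3,3,3,7,7,9],13),
([1,1,3,3,7,3,3,7,7],13),
([1,1,3,3,3,9,9,3,3],7),
([1,1,3,3,3,3,3,7,9],3),
([1,1,3,3,3,3,7,3,7],11),
([1,1,3,3,3,3,3,3,9],7),
([1,1,3,3,3,3,3,3,7],3),
([3,1,3,3,3,1,3,3,3],7),
([1,1,1,9,9,9,9,9,9],3),
([1,1,1,9,9,9,9,7,9],7),
([1,1,1,9,7,7,9,9,9],7),
([1,1,1,7,7,7,9,9,9],3)]"

definition tab12 :: "(nat list \<times> nat) list" where
  "tab12 = [([1,1,1,7,7,7,7,9,9],7),
([1,1,1,7,9,7,7,7,7],7),
([1,1,1,7,7,7,7,7,7],3),
([1,1,1,3,9,9,9,9,9],3),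
([1,1,1,3,9,9,7,9,9],7),
([1,1,1,3,9,7,9,7,9],7),
([1,1,1,3,7,7,7,9,9],3),
([1,1,1,7,3,7,9,7,7],13),
([1,1,1,3,7,7,7,7,7],7),
([1,1,1,3,3,9,9,9,9],3),
([1,1,1,3,7,3,9,9,9],11),
([1,1,1,3,3,9,9,7,7],7),
([1,1,1,3,3,7,7,7,9],3),
([1,1,1,3,7,7,7,7,3],13),
([1,1,1,3,3,3,9,9,9],3),
([1,1,1,3,3,7,9,9,3],13),
([1,1,1,3,3,7,7,9,3],7),
([1,1,1,3,3,3,7,7,7],3),
([1,1,1,3,3,3,3,9,9],3),
([1,1,1,3,3,3,3,9,7],7),
([1,1,1,3,3,7,3,7,3],7),
([1,1,1,3,3,3,3,3,9],3),
([1,1,1,3,3,3,7,3,3],7),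
([1,1,1,3,3,3,3,3,3],3),
([1,1,1,9,9,1,9,9,9],7),
([1,1,1,1,7,9,9,9,9],7),
([1,1,1,1,7,7,9,9,9],3),
([1,1,1,1,7,7,9,7,9],11),
([1,1,1,7,1,7,9,7,7],7),
([1,1,1,1,7,7,7,7,7],3),
([1,1,1,1,9,3,9,9,9],7),
([1,1,1,1,3,7,9,9,9],7),
([1,1,1,1,3,7,7,9,9],3),
([1,1,1,1,3,9,7,7,7],7),
([1,1,1,1,7,3,7,7,7],11),
([1,1,1,1,3,9,3,9,9],7),
([1,1,1,1,3,3,7,9,9],7),
([1,1,1,1,3,3,7,7,9],3),
([1,1,1,1,3,7,3,7,7],13),
([1,1,1,1,3,3,3,9,9],13),
([1,1,1,1,3,3,3,7,9],7),
([1,1,1,1,3,3,3,7,7],3),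
([1,1,1,1,3,3,3,9,3],7),
([1,1,1,1,3,3,3,3,7],7),
([1,1,1,3,3,3,3,1,3],7),
([1,1,1,1,9,9,9,9,1],7),
([1,1,1,1,1,7,9,9,9],3),
([1,1,1,1,1,7,7,9,9],13),
([1,1,1,1,1,7,7,9,7],7),
([1,1,1,1,1,7,7,7,7],3)]"

definition tab13 :: "(nat list \<times> nat) list" where
  "tab13 = [([1,1,1,1,1,9,9,3,9],7),
([1,1,1,1,1,3,7,9,9],3),
([1,1,1,1,1,3,7,7,9],7),
([1,1,1,1,1,7,3,7,7],7),
([1,1,1,1,1,9,3,9,3],7),
([1,1,1,1,1,3,3,7,9],3),
([1,1,1,1,1,3,7,3,7],7),
([1,1,1,1,1,3,9,3,3],7),
([1,1,1,1,1,3,3,3,7],3),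
([1,1,1,3,1,1,3,3,3],7),
([1,1,1,1,1,1,9,9,9],3),
([1,1,1,1,1,1,9,7,9],11),
([1,1,1,1,1,9,1,7,7],13),
([1,1,1,1,1,1,7,7,7],3),
([1,1,1,1,1,1,3,9,9],3),
([1,1,1,1,1,1,7,9,3],13),
([1,1,1,1,1,1,3,7,7],13),
([1,1,1,1,1,1,3,3,9],3),
([1,1,1,1,1,3,3,1,7],7),
([1,1,1,1,1,1,3,3,3],3),
([1,1,1,1,1,9,9,1,1],7),
([1,1,1,1,1,1,7,9,1],7),
([1,1,1,1,1,1,1,7,7],3),
([1,1,1,1,1,1,3,1,9],11),
([1,1,1,1,1,1,3,7,1],7),
([1,1,1,1,1,1,1,3,3],7),
([1,1,1,1,1,1,1,1,9],7),
([1,1,1,1,1,1,1,1,7],3),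
([1,1,1,1,3,1,1,1,1],7),
([1,1,1,1,1,1,1,1,1],3),
([9,9,9,9,9,9,9,9,9,9],3),
([9,9,9,7,9,9,9,9,9,9],13),
([7,7,9,9,9,9,9,9,9,9],11),
([7,7,7,9,9,9,9,9,9,9],3),
([7,7,7,7,9,9,9,9,9,9],7),
([7,7,7,9,7,9,9,9,7,9],7),
([7,7,7,7,7,7,9,9,9,9],3),
([7,7,7,7,7,7,9,9,9,7],13),
([7,7,7,7,7,7,7,7,9,9],11),
([7,7,7,7,7,7,7,7,7,9],3),
([7,7,7,7,7,7,7,7,7,7],7),
([3,9,9,9,9,9,9,9,9,9],3),
([3,9,9,7,9,9,9,9,9,9],7),
([3,7,9,9,9,9,7,9,9,9],7),
([3,7,7,7,9,9,9,9,9,9],3),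
([3,7,7,7,9,9,9,7,9,9],7),
([3,7,7,7,7,7,9,9,9,9],7),
([3,7,7,7,7,7,7,9,9,9],3),
([3,7,7,7,7,7,7,9,9,7],7),
([3,7,7,7,7,9,7,7,7,7],13)]"

definition tab14 :: "(nat list \<times> nat) list" where
  "tab14 = [([3,7,7,7,7,7,7,7,7,7],3),
([3,3,9,9,9,9,9,9,9,9],3),
([3,3,9,9,9,7,9,9,9,9],13),
([3,3,7,7,9,9,9,9,9,9],11),
([3,3,7,7,7,9,9,9,9,9],3),
([3,3,7,7,7,7,9,9,9,9],11),
([3,3,7,7,7,7,9,9,7,9],7),
([3,3,7,7,7,7,7,7,9,9],3),
([3,3,7,7,7,7,7,9,7,7],7),
([3,3,7,7,7,7,7,7,7,7],11),
([3,3,3,9,9,9,9,9,9,9],3),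
([3,3,3,9,9,9,7,9,9,9],13),
([3,3,3,7,9,9,7,9,9,9],7),
([3,3,3,7,7,7,9,9,9,9],3),
([3,3,3,7,7,9,7,7,9,9],7),
([3,3,3,7,7,7,9,7,9,7],11),
([3,3,3,7,7,7,7,7,7,9],3),
([3,3,7,7,7,7,3,7,7,7],7),
([3,3,3,3,9,9,9,9,9,9],3),
([3,3,3,3,9,7,9,9,9,9],7),
([3,3,3,3,7,7,9,9,9,9],11),
([3,3,3,3,7,7,7,9,9,9],3),
([3,3,3,3,7,7,7,7,9,9],11),
([3,3,3,3,7,7,7,7,9,7],7),
([3,3,3,3,7,7,7,7,7,7],3),
([3,3,3,3,3,9,9,9,9,9],3),
([3,3,3,3,3,9,9,9,7,9],7),
([3,3,3,3,3,7,7,9,9,9],7),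
([3,3,3,3,3,7,7,7,9,9],3),
([3,3,3,3,3,7,9,7,7,7],7),
([3,3,3,3,7,7,7,3,7,7],7),
([3,3,3,3,3,3,9,9,9,9],3),
([3,3,3,3,3,3,9,9,9,7],13),
([3,3,3,3,3,3,7,7,9,9],11),
([3,3,3,3,3,3,7,7,7,9],3),
([3,3,3,3,3,3,7,7,7,7],7),
([3,3,3,3,3,3,3,9,9,9],3),
([3,3,3,3,3,3,3,9,9,7],7),
([3,3,3,3,3,3,7,3,9,7],13),
([3,3,3,3,3,3,3,7,7,7],3),
([3,3,3,3,3,3,3,3,9,9],3),
([3,3,3,3,3,3,9,3,7,3],7),
([3,3,3,3,3,3,3,3,7,7],11),
([3,3,3,3,3,3,3,3,3,9],3),
([3,3,3,3,7,3,3,3,3,3],7),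
([3,3,3,3,3,3,3,3,3,3],3),
([9,9,1,9,9,9,9,9,9,9],7),
([1,7,9,9,9,9,9,9,9,9],7),
([1,7,7,9,9,9,9,9,9,9],3),
([1,7,7,9,9,7,9,9,9,9],7)]"

definition tab15 :: "(nat list \<times> nat) list" where
  "tab15 = [([1,7,7,7,9,9,9,9,7,9],7),
([1,7,7,7,7,7,9,9,9,9],3),
([1,7,7,7,7,7,9,9,9,7],7),
([1,7,7,7,7,7,7,7,9,9],7),
([1,7,7,7,7,7,7,7,7,9],3),
([7,7,7,7,7,7,7,1,7,7],29),
([1,9,3,9,9,9,9,9,9,9],7),
([1,3,7,9,9,9,9,9,9,9],7),
([1,3,7,7,9,9,9,9,9,9],3),
([1,3,7,7,9,7,9,9,9,9],11),
([1,3,7,7,7,9,9,9,9,7],7),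
([1,3,7,7,7,7,7,9,9,9],3),
([1,3,7,7,7,7,9,9,7,7],7),
([1,3,7,7,7,7,7,7,7,9],7),
([1,3,7,7,7,7,7,7,7,7],3),
([1,3,3,9,9,9,9,9,9,9],13),
([1,3,3,7,9,9,9,9,9,9],7),
([1,3,3,7,7,9,9,9,9,9],3),
([1,3,3,7,7,9,9,7,9,9],7),
([1,3,3,7,7,9,7,7,9,9],13),
([1,3,3,7,7,7,7,7,9,9],3),
([1,3,3,7,7,7,7,7,7,9],13),
([1,3,3,7,7,7,7,7,7,7],7),
([1,3,3,9,3,9,9,9,9,9],7),
([1,3,3,3,7,9,9,9,9,9],7),
([1,3,3,3,7,7,9,9,9,9],3),
([1,3,3,3,7,7,9,7,9,9],11),
([1,3,3,3,7,7,9,7,9,7],7),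
([1,3,3,3,7,7,7,7,7,9],3),
([1,3,7,3,7,7,7,3,7,7],7),
([1,3,3,3,9,3,9,9,9,9],7),
([1,3,3,3,3,7,9,9,9,9],7),
([1,3,3,3,3,7,7,9,9,9],3),
([1,3,3,3,3,7,7,7,9,9],13),
([1,3,3,3,7,3,7,7,7,9],11),
([1,3,3,3,3,7,7,7,7,7],3),
([1,3,3,3,3,9,3,9,9,9],7),
([1,3,3,3,3,3,7,9,9,9],7),
([1,3,3,3,3,3,7,7,9,9],3),
([1,3,3,3,3,3,7,7,9,7],11),
([1,3,3,3,3,7,7,7,7,3],7),
([1,3,3,3,3,3,9,3,9,9],7),
([1,3,3,3,3,3,3,7,9,9],7),
([1,3,3,3,3,3,3,7,7,9],3),
([1,3,3,3,3,7,3,3,7,7],7),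
([1,3,3,3,3,3,3,9,3,9],7),
([1,3,3,3,3,3,3,3,7,9],7),
([1,3,3,3,3,3,3,3,7,7],3),
([1,3,3,3,3,3,3,3,3,9],13),
([1,3,3,3,3,3,3,3,3,7],7)]"

definition tab16 :: "(nat list \<times> nat) list" where
  "tab16 = [([3,1,3,3,3,3,3,3,3,3],13),
([1,1,9,9,9,9,9,9,9,9],11),
([1,1,7,9,9,9,9,9,9,9],3),
([1,1,7,7,9,9,9,9,9,9],11),
([1,1,7,7,9,7,9,9,9,9],7),
([1,1,7,7,7,7,9,9,9,9],3),
([1,1,7,7,7,7,9,7,9,9],7),
([1,1,7,7,7,7,7,7,9,9],11),
([1,1,7,7,7,7,7,7,7,9],3),
([1,1,7,7,7,7,7,7,7,7],11),
([1,1,9,9,3,9,9,9,9,9],7),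
([1,1,3,7,9,9,9,9,9,9],3),
([1,1,3,7,7,9,9,9,9,9],7),
([1,1,3,7,7,9,7,9,9,9],13),
([1,1,3,7,7,7,7,9,9,9],3),
([1,1,3,7,7,7,7,9,7,9],13),
([1,1,3,7,7,7,7,7,9,7],13),
([1,1,3,7,7,7,7,7,7,7],3),
([1,1,3,3,9,9,9,9,9,9],11),
([1,1,3,3,7,9,9,9,9,9],3),
([1,1,3,3,7,7,9,9,9,9],11),
([1,1,3,3,7,7,9,9,9,7],7),
([1,1,3,3,7,7,7,7,9,9],3),
([1,1,3,3,7,7,9,7,7,7],13),
([1,1,3,3,7,7,7,7,7,7],11),
([1,1,3,3,9,9,9,3,9,9],13),
([1,1,3,3,3,7,9,9,9,9],3),
([1,1,3,3,3,7,7,9,9,9],13),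
([1,1,3,3,3,7,9,7,7,9],7),
([1,1,3,3,3,7,7,7,7,9],3),
([1,1,3,3,3,7,7,7,7,7],7),
([1,1,3,3,3,3,9,9,9,9],11),
([1,1,3,3,3,3,7,9,9,9],3),
([1,1,3,3,3,3,7,7,9,9],11),
([1,1,3,3,3,3,7,7,7,9],7),
([1,1,3,3,3,3,7,7,7,7],3),
([1,1,3,3,3,3,3,9,9,9],7),
([1,1,3,3,3,3,3,7,9,9],3),
([1,1,3,3,3,3,7,7,9,3],7),
([1,1,3,3,3,3,7,7,3,7],7),
([1,1,3,3,3,3,3,3,9,9],11),
([1,1,3,3,3,3,3,3,7,9],3),
([1,1,3,3,3,3,3,3,7,7],11),
([1,1,3,3,3,3,9,3,3,3],7),
([1,1,3,3,3,3,3,3,3,7],3),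
([1,1,3,3,3,3,3,3,3,3],11),
([1,1,1,9,9,9,9,9,9,9],3),
([1,1,1,9,9,9,9,9,7,9],7),
([1,1,1,7,9,9,9,7,9,9],7),
([1,1,1,7,7,7,9,9,9,9],3)]"

definition tab17 :: "(nat list \<times> nat) list" where
  "tab17 = [([1,1,1,7,7,7,7,9,9,9],13),
([1,1,1,7,7,7,7,9,9,7],7),
([1,1,1,7,7,7,7,7,7,9],3),
([1,1,7,7,7,7,1,7,7,7],7),
([1,1,1,3,9,9,9,9,9,9],3),
([1,1,1,3,7,9,9,9,9,9],13),
([1,1,1,3,7,9,9,7,9,9],7),
([1,1,1,3,7,7,7,9,9,9],3),
([1,1,1,3,7,7,9,7,7,9],7),
([1,1,1,3,7,7,7,7,9,7],11),
([1,1,1,3,7,7,7,7,7,7],3),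
([1,1,1,3,3,9,9,9,9,9],3),
([1,1,1,3,3,9,7,9,9,9],7),
([1,1,1,3,3,7,9,7,9,9],7),
([1,1,1,3,3,7,7,7,9,9],3),
([1,1,1,3,3,7,7,7,9,7],7),
([1,1,1,7,3,7,3,7,7,7],13),
([1,1,1,3,3,3,9,9,9,9],3),
([1,1,1,3,3,3,9,7,9,9],11),
([1,1,1,3,3,3,7,7,9,9],7),
([1,1,1,3,3,3,7,7,7,9],3),
([1,1,1,3,3,7,7,3,7,7],7),
([1,1,1,3,3,3,3,9,9,9],3),
([1,1,1,3,3,3,7,9,3,9],7),
([1,1,1,3,3,3,3,9,7,7],7),
([1,1,1,3,3,3,3,7,7,7],3),
([1,1,1,3,3,3,3,3,9,9],3),
([1,1,1,3,3,3,3,3,9,7],11),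
([1,1,1,3,3,3,3,3,7,7],13),
([1,1,1,3,3,3,3,3,3,9],3),
([1,1,3,1,3,3,7,3,3,3],7),
([1,1,1,3,3,3,3,3,3,3],3),
([1,1,1,1,9,9,9,9,9,9],11),
([1,1,1,1,9,7,9,9,9,9],13),
([1,1,1,1,7,7,9,9,9,9],3),
([1,1,1,1,7,7,9,7,9,9],13),
([1,1,1,1,7,7,7,7,9,9],11),
([1,1,1,1,7,7,7,7,7,9],3),
([1,1,1,1,7,7,7,7,7,7],11),
([1,1,1,1,9,9,9,3,9,9],7),
([1,1,1,1,9,3,9,9,9,7],7),
([1,1,1,1,3,7,7,9,9,9],3),
([1,1,1,1,3,7,7,7,9,9],7),
([1,1,1,1,3,9,7,7,7,7],7),
([1,1,1,1,3,7,7,7,7,7],3),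
([1,1,1,1,3,3,9,9,9,9],7),
([1,1,1,1,3,7,9,3,9,9],13),
([1,1,1,1,3,3,7,7,9,9],3),
([1,1,1,1,3,7,3,9,7,7],7),
([1,1,1,1,3,3,7,7,7,7],11)]"

definition tab18 :: "(nat list \<times> nat) list" where
  "tab18 = [([1,1,1,1,3,9,9,3,9,3],13),
([1,1,1,1,3,3,3,9,7,9],7),
([1,1,1,1,3,3,3,7,7,9],3),
([1,1,1,1,3,3,7,7,7,3],7),
([1,1,1,1,3,3,3,3,9,9],11),
([1,1,1,1,3,3,3,3,7,9],13),
([1,1,1,1,3,3,3,3,7,7],3),
([1,1,1,1,3,3,9,3,3,3],13),
([1,1,1,1,3,7,3,3,3,3],7),
([1,1,1,1,3,3,3,3,3,3],11),
([1,1,1,1,1,9,9,9,9,9],7),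
([1,1,1,1,1,7,9,9,9,9],3),
([1,1,1,1,1,7,9,9,7,9],7),
([1,1,1,1,1,7,9,7,9,7],7),
([1,1,1,1,1,7,7,7,7,9],3),
([1,1,1,1,7,7,7,1,7,7],7),
([1,1,1,1,3,9,9,9,1,9],7),
([1,1,1,1,1,3,7,9,9,9],3),
([1,1,1,1,1,3,7,9,7,9],7),
([1,1,1,1,1,3,7,7,9,7],7),
([1,1,1,1,1,3,7,7,7,7],3),
([1,1,1,1,1,3,9,9,3,9],7),
([1,1,1,1,1,3,3,7,9,9],3),
([1,1,1,1,1,3,3,7,7,9],7),
([1,1,1,1,1,3,3,7,7,7],13),
([1,1,1,1,1,3,9,3,9,3],7),
([1,1,1,1,1,3,3,3,7,9],3),
([1,1,1,1,1,3,3,7,3,7],7),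
([1,1,1,1,1,3,3,9,3,3],7),
([1,1,1,1,1,3,3,3,3,7],3),
([1,1,1,1,3,1,3,3,3,3],13),
([1,1,1,1,1,1,9,9,9,9],3),
([1,1,1,1,1,1,9,9,9,7],13),
([1,1,1,1,1,1,7,7,9,9],11),
([1,1,1,1,1,1,7,7,7,9],3),
([1,1,1,1,1,1,7,7,7,7],7),
([1,1,1,1,1,1,3,9,9,9],3),
([1,1,1,1,1,1,3,9,9,7],7),
([1,1,1,1,1,1,7,3,9,7],13),
([1,1,1,1,1,1,3,7,7,7],3),
([1,1,1,1,1,1,3,3,9,9],3),
([1,1,1,1,1,1,9,3,7,3],7),
([1,1,1,1,1,1,3,3,7,7],11),
([1,1,1,1,1,1,3,3,3,9],3),
([1,1,1,1,1,3,1,3,7,3],11),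
([1,1,1,1,1,1,3,3,3,3],3),
([1,1,1,1,1,1,9,9,1,9],7),
([1,1,1,1,1,1,1,7,9,9],7),
([1,1,1,1,1,1,1,7,7,9],3),
([1,1,1,1,1,7,7,1,7,1],13)]"

definition tab19 :: "(nat list \<times> nat) list" where
  "tab19 = [([1,1,1,1,1,1,1,9,3,9],7),
([1,1,1,1,1,1,1,3,7,9],7),
([1,1,1,1,1,1,1,3,7,7],3),
([1,1,1,1,1,1,1,3,3,9],13),
([1,1,1,1,1,1,1,3,3,7],7),
([1,1,1,1,1,1,3,1,3,3],13),
([1,1,1,1,1,1,1,1,9,9],11),
([1,1,1,1,1,1,1,1,7,9],3),
([1,1,1,1,1,1,1,1,7,7],11),
([1,1,1,1,1,1,1,3,9,1],13),
([1,1,1,1,1,1,1,1,3,7],3),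
([1,1,1,1,1,1,1,1,3,3],11),
([1,1,1,1,1,1,1,1,1,9],3),
([1,1,1,1,1,1,7,1,1,1],13),
([1,1,1,1,1,1,1,1,1,3],3),
([1,1,1,1,1,1,1,1,1,1],11)]"


definition tab :: "(nat list \<times> nat) list" where
  "tab = tab0 @ tab1 @ tab2 @ tab3 @ tab4 @ tab5 @ tab6 @ tab7 @ tab8 @ tab9 @ tab10 @ tab11 @ tab12 @ tab13 @ tab14 @ tab15 @ tab16 @ tab17 @ tab18 @ tab19"

lemma tab0_ok: "list_all okp tab0"
  by (simp add: tab0_def okp_def)

lemma tab1_ok: "list_all okp tab1"
  by (simp add: tab1_def okp_def)

lemma tab2_ok: "list_all okp tab2"
  by (simp add: tab2_def okp_def)

lemma tab3_ok: "list_all okp tab3"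
  by (simp add: tab3_def okp_def)

lemma tab4_ok: "list_all okp tab4"
  by (simp add: tab4_def okp_def)

lemma tab5_ok: "list_all okp tab5"
  by (simp add: tab5_def okp_def)

lemma tab6_ok: "list_all okp tab6"
  by (simp add: tab6_def okp_def)

lemma tab7_ok: "list_all okp tab7"
  by (simp add: tab7_def okp_def)

lemma tab8_ok: "list_all okp tab8"
  by (simp add: tab8_def okp_def)

lemma tab9_ok: "list_all okp tab9"
  by (simp add: tab9_def okp_def)

lemma tab10_ok: "list_all okp tab10"
  by (simp add: tab10_def okp_def)

lemma tab11_ok: "list_all okp tab11"
  by (simp add: tab11_def okp_def)

lemma tab12_ok: "list_all okp tab12"
  by (simp add: tab12_def okp_def)

lemma tab13_ok: "list_all okp tab13"
  by (simp add: tab13_def okp_def)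

lemma tab14_ok: "list_all okp tab14"
  by (simp add: tab14_def okp_def)

lemma tab15_ok: "list_all okp tab15"
  by (simp add: tab15_def okp_def)

lemma tab16_ok: "list_all okp tab16"
  by (simp add: tab16_def okp_def)

lemma tab17_ok: "list_all okp tab17"
  by (simp add: tab17_def okp_def)

lemma tab18_ok: "list_all okp tab18"
  by (simp add: tab18_def okp_def)

lemma tab19_ok: "list_all okp tab19"
  by (simp add: tab19_def okp_def)


lemma tab_ok: "list_all okp tab"
  unfolding tab_def list_all_append
  by (intro conjI tab0_ok tab1_ok tab2_ok tab3_ok tab4_ok tab5_ok tab6_ok tab7_ok tab8_ok tab9_ok tab10_ok tab11_ok tab12_ok tab13_ok tab14_ok tab15_ok tab16_ok tab17_ok tab18_ok tab19_ok)

lemma tab_cnt: "map (cnt \<circ> fst) tab = cenum"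
  by (simp add: tab_def tab0_def tab1_def tab2_def tab3_def tab4_def tab5_def tab6_def tab7_def tab8_def tab9_def tab10_def tab11_def tab12_def tab13_def tab14_def tab15_def tab16_def tab17_def tab18_def tab19_def cenum_def cnt_def upt_rec)

lemma cenum_mem:
  assumes "a + b + c + e = N" "4 \<le> N" "N \<le> 10"
  shows "(a,b,c,e) \<in> set cenum"
proof -
  have m1: "N \<in> set [4..<11]" using assms by (simp only: set_upt atLeastLessThan_iff) arith
  have m2: "a \<in> set [0..<N+1]" using assms by (simp only: set_upt atLeastLessThan_iff) arith
  have m3: "b \<in> set [0..<N-a+1]" using assms by (simp only: set_upt atLeastLessThan_iff) arith
  have m4: "c \<in> set [0..<N-a-b+1]" using assms by (simp only: set_upt atLeastLessThan_iff) arith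
  have m5: "(a,b,c,e) = (a,b,c,N-a-b-c)" using assms by simp
  show ?thesis
    unfolding m5
    apply (simp only: cenum_def set_concat set_map)
    apply (rule UN_I[OF imageI[OF m1]])
    apply (simp only: set_concat set_map)
    apply (rule UN_I[OF imageI[OF m2]])
    apply (simp only: set_concat set_map)
    apply (rule UN_I[OF imageI[OF m3]])
    apply (simp only: set_map)
    apply (rule imageI[OF m4])
    done
qed

lemma sum_dval: "length w = N \<Longrightarrow> (\<Sum>i<N. w ! i * 10 ^ (N - 1 - i)) = dval w"
proof (induction w arbitrary: N)
  case Nil
  then show ?case by simp
next
  case (Cons x xs)
  then obtain n where n: "N = Suc n" "length xs = n" by auto
  have "(\<Sum>i<N. (x # xs) ! i * 10 ^ (N - 1 - i)) =
        x * 10 ^ n + (\<Sum>i<n. xs ! i * 10 ^ (n - 1 - i))"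
    unfolding n(1) sum.lessThan_Suc_shift by simp
  also have "\<dots> = dval (x # xs)" using Cons.IH[OF n(2)] n by simp
  finally show ?case .
qed

lemma dval_snoc: "dval (xs @ [e]) = 10 * dval xs + e"
  by (induction xs) (auto simp: algebra_simps)

lemma dval_zero: "dval xs = 0 \<Longrightarrow> x \<in> set xs \<Longrightarrow> x = 0"
  by (induction xs) auto

lemma len_cnt: "set xs \<subseteq> {1,3,7,9} \<Longrightarrow>
  count_list xs 1 + count_list xs 3 + count_list xs 7 + count_list xs (9::nat) = length xs"
  by (induction xs) auto

lemma key:
  fixes d w :: "nat list"
  assumes H: "\<forall>\<sigma>. \<sigma> permutes {..<N} \<longrightarrow> prime (\<Sum>i<N. d ! (\<sigma> i) * 10 ^ (N - 1 - i))"
    and L: "length d = N" and M: "mset w = mset d"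
  shows "prime (dval w)"
proof -
  obtain p where p: "p permutes {..<length d}" "permute_list p d = w"
    using mset_eq_permutation[OF M] by blast
  have lw: "length w = N" using L M by (metis size_mset)
  have "(\<Sum>i<N. d ! (p i) * 10 ^ (N - 1 - i)) = (\<Sum>i<N. w ! i * 10 ^ (N - 1 - i))"
    using p L by (auto intro!: sum.cong simp: permute_list_nth)
  also have "\<dots> = dval w" using sum_dval[OF lw] .
  finally show ?thesis using H p L by metis
qed

lemma digits_ok:
  fixes d :: "nat list" and x :: nat
  assumes H: "\<forall>\<sigma>. \<sigma> permutes {..<N} \<longrightarrow> prime (\<Sum>i<N. d ! (\<sigma> i) * 10 ^ (N - 1 - i))"
    and L: "length d = N" and N4: "4 \<le> N" and D: "\<forall>i<N. d ! i < 10" and x: "x \<in> set d"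
  shows "x \<in> {1,3,7,9}"
proof (rule ccontr)
  assume nx: "x \<notin> {1,3,7,9}"
  have "x < 10" using x D L by (metis in_set_conv_nth)
  with nx have xc: "x = 0 \<or> x = 2 \<or> x = 4 \<or> x = 5 \<or> x = 6 \<or> x = 8" by auto
  define r where "r = remove1 x d"
  have m1: "mset (r @ [x]) = mset d" using x unfolding r_def by simp
  have pr: "prime (10 * dval r + x)" using key[OF H L m1] by (simp add: dval_snoc)
  have r0: "dval r = 0 \<and> (x = 2 \<or> x = 5)"
  proof -
    { assume "x = 0"
      then have "prime (2 * (5 * dval r))" using pr by simp
      from prime_product[OF this] have "5 * dval r = 1" by simp
      then have False by simp }
    moreover
    { assume "x = 2 \<or> x = 4 \<or> x = 6 \<or> x = 8"
      then obtain y where y: "x = 2 * y" "y \<in> {1,2,3,4}" by auto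
      then have "prime (2 * (5 * dval r + y))" using pr by (simp add: algebra_simps)
      from prime_product[OF this] have "5 * dval r + y = 1" by simp
      then have ?thesis using y by auto }
    moreover
    { assume "x = 5"
      then have "prime (5 * (2 * dval r + 1))" using pr by (simp add: algebra_simps)
      from prime_product[OF this] have "2 * dval r + 1 = 1" by simp
      then have ?thesis using \<open>x = 5\<close> by auto }
    ultimately show ?thesis using xc by blast
  qed
  have m2: "mset (x # r) = mset d" using x unfolding r_def by simp
  have lr: "length r = N - 1" using x L unfolding r_def by (simp add: length_remove1)
  have "prime (dval (x # r))" using key[OF H L m2] .
  then have "prime (x * 10 ^ (N - 1))" using r0 lr by simp
  then have "x = 1 \<or> 10 ^ (N - 1) = (1::nat)" using prime_product by blast
  moreover have "10 ^ (N - 1) \<noteq> (1::nat)" using N4 by simp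
  ultimately show False using r0 by auto
qed

theorem mainTheorem2:
  fixes N :: nat
  assumes "4 \<le> N" and "N \<le> 10"
  shows "\<not> (\<exists>d :: nat list. length d = N \<and> (\<forall>i<N. d ! i < 10) \<and> d ! 0 \<noteq> 0 \<and>
            (\<forall>\<sigma>. \<sigma> permutes {..<N} \<longrightarrow>
               prime (\<Sum>i<N. d ! (\<sigma> i) * 10 ^ (N - 1 - i))))"
proof
  assume "\<exists>d :: nat list. length d = N \<and> (\<forall>i<N. d ! i < 10) \<and> d ! 0 \<noteq> 0 \<and>
            (\<forall>\<sigma>. \<sigma> permutes {..<N} \<longrightarrow>
               prime (\<Sum>i<N. d ! (\<sigma> i) * 10 ^ (N - 1 - i)))"
  then obtain d :: "nat list" where L: "length d = N" and D: "\<forall>i<N. d ! i < 10"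
    and H: "\<forall>\<sigma>. \<sigma> permutes {..<N} \<longrightarrow> prime (\<Sum>i<N. d ! (\<sigma> i) * 10 ^ (N - 1 - i))"
    by blast
  have S: "set d \<subseteq> {1,3,7,9}" using digits_ok[OF H L assms(1) D] by blast
  have "cnt d \<in> set cenum"
    unfolding cnt_def by (rule cenum_mem) (use len_cnt[OF S] L assms in auto)
  then have "cnt d \<in> set (map (cnt \<circ> fst) tab)" by (simp add: tab_cnt)
  then obtain w p where wp: "(w, p) \<in> set tab" and cw: "cnt w = cnt d" by auto
  have ok: "okp (w, p)" using tab_ok wp by (simp add: list_all_iff)
  then have p1: "1 < p" and p2: "p < dval w" and p3: "p dvd dval w" and Sw: "set w \<subseteq> {1,3,7,9}"
    unfolding okp_def by (auto simp: list_all_iff dvd_eq_mod_eq_0)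
  have "mset w = mset d"
  proof (rule multiset_eqI)
    fix y :: nat
    show "count (mset w) y = count (mset d) y"
    proof (cases "y \<in> {1,3,7,9}")
      case True then show ?thesis using cw by (auto simp: count_mset cnt_def)
    next
      case False
      then have "y \<notin> set w" "y \<notin> set d" using S Sw by auto
      then show ?thesis by (simp add: count_mset)
    qed
  qed
  then have "prime (dval w)" using key[OF H L] by blast
  then show False using p1 p2 p3 by (metis prime_nat_iff less_not_refl)
qed

end
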